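(* Let $x\in[0,1)$ be rational, written in binary as $x=0.\alpha_1\alpha_2\alpha_3\ldots$ (choosing the expansion that does not end in infinitely many $1$'s). Define the walk $P_0=(0,0)$, $P_i=P_{i-1}+(1,0)$ if $\alpha_i=1$ and $P_i=P_{i-1}+(0,1)$ if $\alpha_i=0$. Let $X_i=1$ if $\gcd$ of the coordinates of $P_i$ equals $1$ and $X_i=0$ otherwise, and $\overline S_n(x)=\frac{X_1+\cdots+X_n}{n}$. Then $\lim_{n\to\infty}\overline S_n(x)$ exists and is a rational number. *)

theory Defs
  imports Complex_Main
begin

text \<open>The i-th binary digit (i \<ge> 1) of x \<in> [0,1), taken from the expansion
  x = 0.a1 a2 a3 ... that does not end in infinitely many 1's.\<close>
definition bdigit :: "real \<Rightarrow> nat \<Rightarrow> nat" where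
  "bdigit x i = nat (\<lfloor>2 ^ i * x\<rfloor> mod 2)"

fun walk :: "real \<Rightarrow> nat \<Rightarrow> nat \<times> nat" where
  "walk x 0 = (0, 0)"
| "walk x (Suc i) =
     (if bdigit x (Suc i) = 1 then (fst (walk x i) + 1, snd (walk x i))
      else (fst (walk x i), snd (walk x i) + 1))"

definition Xind :: "real \<Rightarrow> nat \<Rightarrow> nat" where
  "Xind x i = (if gcd (fst (walk x i)) (snd (walk x i)) = 1 then 1 else 0)"

definition Sbar :: "real \<Rightarrow> nat \<Rightarrow> real" where
  "Sbar x n = (\<Sum>i=1..n. real (Xind x i)) / real n"

end

theory Submission
  imports Defs
begin


lemma periodic_mod:
  fixes g :: "nat \<Rightarrow> 'a"
  assumes per: "\<forall>n\<ge>N. g (n+Q) = g n" and n: "n \<ge> N"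
  shows "g n = g (N + (n-N) mod Q)"
proof -
  have k: "g (N + r + k*Q) = g (N + r)" for r k
  proof (induction k)
    case 0 then show ?case by simp
  next
    case (Suc k)
    have "g (N + r + Suc k*Q) = g ((N + r + k*Q) + Q)" by (simp add: algebra_simps)
    also have "\<dots> = g (N + r + k*Q)" using per by simp
    finally show ?case using Suc by simp
  qed
  have "n = N + (n-N) mod Q + ((n-N) div Q)*Q" using n by simp
  then have "g n = g (N + (n-N) mod Q + ((n-N) div Q)*Q)" by simp
  also have "\<dots> = g (N + (n-N) mod Q)" by (rule k)
  finally show ?thesis .
qed

lemma sum_split_aux:
  fixes f :: "nat \<Rightarrow> real"
  shows "(\<Sum>i=1..n+k. f i) = (\<Sum>i=1..n. f i) + (\<Sum>j<k. f (n+1+j))"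
  by (induction k) (simp_all add: algebra_simps)

lemma cesaro_periodic:
  fixes f :: "nat \<Rightarrow> real"
  assumes Q: "Q > 0" and per: "\<forall>i\<ge>N. f (i+Q) = f i"
  shows "(\<lambda>n. (\<Sum>i=1..n. f i) / real n) \<longlonglongrightarrow> (\<Sum>j<Q. f (N+1+j)) / real Q"
proof -
  define c where "c = (\<Sum>j<Q. f (N+1+j))"
  define S where "S n = (\<Sum>i=1..n. f i)" for n
  obtain m where m: "Q = Suc m" using Q gr0_implies_Suc by blast
  have W: "(\<Sum>j<Q. f (n+1+j)) = c" if "n \<ge> N" for n
    using that
  proof (induction n rule: dec_induct)
    case base then show ?case by (simp add: c_def)
  next
    case (step n)
    have "(\<Sum>j<Q. f (Suc n+1+j)) = (\<Sum>j<m. f (n+2+j)) + f (n+2+m)"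
      unfolding m by (simp add: algebra_simps)
    also have "f (n+2+m) = f (n+1)"
    proof -
      have "f ((n+1)+Q) = f (n+1)" using per[rule_format, of "n+1"] step(1) by simp
      moreover have "n+2+m = (n+1)+Q" by (simp add: m)
      ultimately show ?thesis by metis
    qed
    also have "(\<Sum>j<m. f (n+2+j)) + f (n+1) = (\<Sum>j<Q. f (n+1+j))"
      unfolding m by (subst sum.lessThan_Suc_shift) (simp add: algebra_simps)
    finally show ?case using step by simp
  qed
  have SQ: "S (n+Q) = S n + c" if "n \<ge> N" for n
    using W[OF that] sum_split_aux[of f n Q] unfolding S_def by simp
  define E where "E n = S n - c * real n / real Q" for n
  have EQ: "\<forall>n\<ge>N. E (n+Q) = E n"
  proof (intro allI impI)
    fix n assume "n \<ge> N"
    then have "S (n+Q) = S n + c" by (rule SQ)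
    then show "E (n+Q) = E n" using Q by (simp add: E_def field_simps)
  qed
  define B where "B = (\<Sum>j<Q. \<bar>E (N+j)\<bar>)"
  have EB: "\<bar>E n\<bar> \<le> B" if "n \<ge> N" for n
  proof -
    have "E n = E (N + (n-N) mod Q)" by (rule periodic_mod[OF EQ that])
    moreover have "\<bar>E (N + (n-N) mod Q)\<bar> \<le> B" unfolding B_def
      by (rule member_le_sum[where f="\<lambda>j. \<bar>E (N+j)\<bar>"]) (use Q in auto)
    ultimately show ?thesis by simp
  qed
  have B0: "(\<lambda>n. B * (1 / real n)) \<longlonglongrightarrow> 0"
    using tendsto_mult_right_zero[OF lim_inverse_n'] by simp
  have Bm0: "(\<lambda>n. - (B * (1 / real n))) \<longlonglongrightarrow> 0"
    using tendsto_minus[OF B0] by simp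
  have E0: "(\<lambda>n. E n / real n) \<longlonglongrightarrow> 0"
  proof (rule tendsto_sandwich[OF _ _ Bm0 B0])
    show "\<forall>\<^sub>F n in sequentially. - (B * (1 / real n)) \<le> E n / real n"
      using eventually_ge_at_top[of "max N 1"]
    proof eventually_elim
      case (elim n)
      then have "-B \<le> E n" "E n \<le> B" "real n > 0" using EB[of n] by auto
      then show ?case by (simp add: field_simps)
    qed
    show "\<forall>\<^sub>F n in sequentially. E n / real n \<le> B * (1 / real n)"
      using eventually_ge_at_top[of "max N 1"]
    proof eventually_elim
      case (elim n)
      then have "-B \<le> E n" "E n \<le> B" "real n > 0" using EB[of n] by auto
      then show ?case by (simp add: field_simps)
    qed
  qed
  have "(\<lambda>n. c / real Q + E n / real n) \<longlonglongrightarrow> c / real Q + 0"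
    by (intro tendsto_intros E0)
  then have L: "(\<lambda>n. c / real Q + E n / real n) \<longlonglongrightarrow> c / real Q" by simp
  have ev: "\<forall>\<^sub>F n in sequentially. c / real Q + E n / real n = (\<Sum>i=1..n. f i) / real n"
    using eventually_ge_at_top[of 1]
    by eventually_elim (use Q in \<open>auto simp: E_def S_def field_simps\<close>)
  show ?thesis unfolding c_def[symmetric] using Lim_transform_eventually[OF L ev] .
qed


lemma div_mod2_int:
  fixes A b :: int assumes "b > 0"
  shows "A div b mod 2 = (A mod (2*b)) div b"
proof -
  have "A mod (b*2) = b*(A div b mod 2) + A mod b" by (rule zmod_zmult2_eq) simp
  then have "(A mod (b*2)) div b = (b*(A div b mod 2) + A mod b) div b" by simp
  also have "\<dots> = A div b mod 2" using assms by simp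
  finally show ?thesis by (simp add: mult.commute)
qed

lemma digits_periodic:
  assumes "x \<in> \<rat>"
  shows "\<exists>N p. p > 0 \<and> (\<forall>i\<ge>N. bdigit x (i+p) = bdigit x i)"
proof -
  obtain a b :: int where b: "b > 0" and x: "x = of_int a / of_int b"
    using Rats_cases'[OF assms] by metis
  have bd: "bdigit x i = nat ((2^i * a) mod (2*b) div b)" for i
  proof -
    have "2^i * x = of_int (2^i*a) / of_int b" by (simp add: x)
    then have "\<lfloor>2^i * x\<rfloor> = (2^i*a) div b" by (metis floor_divide_of_int_eq)
    then show ?thesis unfolding bdigit_def using div_mod2_int[OF b] by simp
  qed
  define f where "f k = (2::int)^k mod (2*b)" for k
  have "finite (f ` UNIV)"
  proof (rule finite_subset)
    show "f ` UNIV \<subseteq> {0..<2*b}" using b by (auto simp: f_def)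
  qed simp
  then obtain i where "infinite {k \<in> UNIV. f k = f i}"
    using pigeonhole_infinite[of "UNIV::nat set" f] by auto
  then obtain j where j: "j > i" "f j = f i"
    by (metis (mono_tags, lifting) finite_nat_set_iff_bounded_le mem_Collect_eq not_le_imp_less)
  define p where "p = j - i"
  have per2: "2^(t+p) mod (2*b) = 2^t mod (2*b)" if "t \<ge> i" for t
  proof -
    have "(2::int)^(t+p) = 2^(t-i) * 2^j" using that j by (simp add: p_def flip: power_add)
    moreover have "(2::int)^t = 2^(t-i) * 2^i" using that by (simp flip: power_add)
    ultimately show ?thesis using j(2) unfolding f_def by (metis mod_mult_right_eq)
  qed
  have "bdigit x (t+p) = bdigit x t" if "t \<ge> i" for t
  proof -
    have "(2^(t+p)*a) mod (2*b) = (2^t*a) mod (2*b)"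
      using per2[OF that] by (metis mod_mult_left_eq)
    then show ?thesis unfolding bd by simp
  qed
  moreover have "p > 0" using j by (simp add: p_def)
  ultimately show ?thesis by blast
qed



lemma small_dvd_fact:
  fixes h M :: nat and D :: int
  assumes "h \<noteq> 0" "int h dvd D" "D \<noteq> 0" "\<bar>D\<bar> \<le> int M"
  shows "h dvd fact M"
proof -
  have "\<bar>int h\<bar> \<le> \<bar>D\<bar>" using dvd_imp_le_int[OF assms(3,2)] .
  then have "h \<le> M" using assms(4) by simp
  then show ?thesis using assms(1) by (intro dvd_fact) auto
qed

lemma gcd_shift_nonzero:
  fixes u v a b M :: nat
  assumes D: "int b * int u - int a * int v \<noteq> 0"
    and DM: "\<bar>int b * int u - int a * int v\<bar> \<le> int M"
  shows "gcd (u + fact M * a) (v + fact M * b) = 1 \<longleftrightarrow> gcd u v = 1"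
proof -
  define T :: nat where "T = fact M"
  define D where "D = int b * int u - int a * int v"
  have T1: "T \<ge> 1" by (simp add: T_def)
  define g where "g = gcd (u + T * a) (v + T * b)"
  define h where "h = gcd u v"
  have Deq: "D = int b * int (u + T*a) - int a * int (v + T*b)"
    by (simp add: D_def algebra_simps)
  have g0: "g \<noteq> 0"
  proof
    assume "g = 0"
    then have "u + T*a = 0" "v + T*b = 0" by (auto simp: g_def)
    then have "D = 0" using Deq by simp
    then show False using assms by (simp add: D_def)
  qed
  have g1: "int g dvd int (u+T*a)" unfolding int_dvd_int_iff g_def by simp
  have g2: "int g dvd int (v+T*b)" unfolding int_dvd_int_iff g_def by simp
  have gD: "int g dvd D" unfolding Deq
    by (intro dvd_diff dvd_mult g1 g2)
  have gT: "g dvd T" unfolding T_def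
    by (rule small_dvd_fact[OF g0 gD]) (use assms in \<open>simp_all add: D_def\<close>)
  have gu: "g dvd u"
  proof -
    have "g dvd u + T*a" by (simp add: g_def)
    moreover have "g dvd T*a" using gT by simp
    ultimately show ?thesis by (simp add: dvd_add_left_iff)
  qed
  have gv: "g dvd v"
  proof -
    have "g dvd v + T*b" by (simp add: g_def)
    moreover have "g dvd T*b" using gT by simp
    ultimately show ?thesis by (simp add: dvd_add_left_iff)
  qed
  have h0: "h \<noteq> 0"
  proof
    assume "h = 0"
    then have "u = 0" "v = 0" by (auto simp: h_def)
    then show False using assms by simp
  qed
  have hD: "int h dvd D" unfolding D_def h_def
    by (intro dvd_diff dvd_mult) (simp_all add: int_dvd_int_iff)
  have hT: "h dvd T" unfolding T_def
    by (rule small_dvd_fact[OF h0 hD]) (use assms in \<open>simp_all add: D_def\<close>)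
  have hg: "h dvd g" unfolding g_def
    by (intro gcd_greatest dvd_add) (use hT in \<open>simp_all add: h_def\<close>)
  have gh: "g dvd h" unfolding h_def using gu gv by simp
  have "g = h" using hg gh by (simp add: dvd_antisym)
  then show ?thesis by (simp add: g_def h_def T_def)
qed

lemma gcd_shift_zero:
  fixes u v a b c :: nat
  assumes eq: "b * u = a * v" and ab: "a + b > 0" and c: "c \<ge> 2"
  shows "gcd (u + c * a) (v + c * b) \<noteq> 1"
proof -
  define g where "g = gcd a b"
  have g0: "g > 0" using ab by (simp add: g_def)
  obtain a' b' where ab': "a = a' * g" "b = b' * g" "coprime a' b'"
    using gcd_coprime_exists[of a b] g0 unfolding g_def by auto
  have eq': "b' * u = a' * v" using eq g0 ab' by (simp add: algebra_simps)
  obtain s where s: "u = s * a'" "v = s * b'"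
  proof (cases "a' = 0")
    case True
    then have "b' = 1" using ab'(3) by simp
    then show ?thesis using eq' True that[of v] by simp
  next
    case False
    have "a' dvd b' * u" using eq' by simp
    then have "a' dvd u" using ab'(3) by (simp add: coprime_dvd_mult_right_iff)
    then obtain s where us: "u = s * a'" by (auto simp: dvd_def mult.commute)
    then have "v = s * b'" using eq' False by (simp add: algebra_simps)
    then show ?thesis using us that by blast
  qed
  define d where "d = s + c * g"
  have "c * g \<ge> c * 1" using g0 by (intro mult_le_mono2) simp
  then have "c * g \<ge> c" by simp
  then have d2: "d \<ge> 2" using c unfolding d_def by linarith
  have "u + c * a = d * a'" by (simp add: d_def s ab' algebra_simps)
  moreover have "v + c * b = d * b'" by (simp add: d_def s ab' algebra_simps)
  ultimately have "d dvd gcd (u + c * a) (v + c * b)" by simp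
  then show ?thesis using d2 by (metis nat_dvd_1_iff_1 numeral_le_one_iff semiring_norm(69))
qed


lemma walk_sum: "fst (walk x i) + snd (walk x i) = i"
  by (induction i) auto

lemma walk_mono: "fst (walk x i) \<le> fst (walk x (i+k)) \<and> snd (walk x i) \<le> snd (walk x (i+k))"
  by (induction k) auto

lemma walk_shift:
  assumes per: "\<forall>i\<ge>N. bdigit x (i+p) = bdigit x i"
  shows "i \<ge> N \<Longrightarrow> walk x (i+p) = (fst (walk x i) + (fst (walk x (N+p)) - fst (walk x N)),
                                  snd (walk x i) + (snd (walk x (N+p)) - snd (walk x N)))"
proof (induction i rule: dec_induct)
  case base
  then show ?case using walk_mono[of x N p] by (simp add: prod_eq_iff)
next
  case (step n)
  have d: "bdigit x (Suc (n+p)) = bdigit x (Suc n)"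
    using per[rule_format, of "Suc n"] step(1) by simp
  show ?case using step(3) d by (simp add: prod_eq_iff)
qed

theorem theorem3:
  fixes x :: real
  assumes "x \<in> \<rat>" and "0 \<le> x" and "x < 1"
  shows "\<exists>L \<in> \<rat>. Sbar x \<longlonglongrightarrow> L"
proof -
  obtain N0 p where p: "p > 0" and dper: "\<forall>i\<ge>N0. bdigit x (i+p) = bdigit x i"
    using digits_periodic[OF assms(1)] by blast
  define A where "A = fst (walk x (N0+p)) - fst (walk x N0)"
  define B where "B = snd (walk x (N0+p)) - snd (walk x N0)"
  have ws: "walk x (i+p) = (fst (walk x i) + A, snd (walk x i) + B)" if "i \<ge> N0" for i
    using walk_shift[OF dper that] by (simp add: A_def B_def)
  have wk: "walk x (i+k*p) = (fst (walk x i) + k*A, snd (walk x i) + k*B)" if "i \<ge> N0" for i k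
  proof (induction k)
    case 0 then show ?case by simp
  next
    case (Suc k)
    have "walk x (i + Suc k * p) = walk x ((i + k*p) + p)" by (simp add: algebra_simps)
    also have "\<dots> = (fst (walk x (i+k*p)) + A, snd (walk x (i+k*p)) + B)"
      using that by (intro ws) simp
    finally show ?case using Suc by (simp add: algebra_simps)
  qed
  have ApB: "A + B = p"
    using walk_sum[of x N0] walk_sum[of x "N0+p"] walk_mono[of x N0 p]
    unfolding A_def B_def by linarith
  define D where "D i = int B * int (fst (walk x i)) - int A * int (snd (walk x i))" for i
  have Dper: "\<forall>i\<ge>N0. D (i+p) = D i"
    by (auto simp: D_def ws algebra_simps)
  define M where "M = nat (\<Sum>j<p. \<bar>D (N0+j)\<bar>)"
  have DM: "\<bar>D i\<bar> \<le> int M" if "i \<ge> N0" for i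
  proof -
    have "D i = D (N0 + (i-N0) mod p)" by (rule periodic_mod[OF Dper that])
    moreover have "\<bar>D (N0 + (i-N0) mod p)\<bar> \<le> (\<Sum>j<p. \<bar>D (N0+j)\<bar>)"
      by (rule member_le_sum[where f="\<lambda>j. \<bar>D (N0+j)\<bar>"]) (use p in auto)
    ultimately show ?thesis unfolding M_def by simp
  qed
  define T :: nat where "T = fact M"
  have T1: "T \<ge> 1" by (simp add: T_def)
  define Q where "Q = T * p"
  have Q0: "Q > 0" using T1 p by (simp add: Q_def)
  define N1 where "N1 = N0 + 2*p"
  have Xper: "\<forall>i\<ge>N1. Xind x (i+Q) = Xind x i"
  proof (intro allI impI)
    fix i assume i: "i \<ge> N1"
    then have iN0: "i \<ge> N0" by (simp add: N1_def)
    have wQ: "walk x (i+Q) = (fst (walk x i) + T*A, snd (walk x i) + T*B)"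
      using wk[OF iN0, of T] by (simp add: Q_def)
    show "Xind x (i+Q) = Xind x i"
    proof (cases "D i = 0")
      case False
      have "gcd (fst (walk x i) + fact M * A) (snd (walk x i) + fact M * B) = 1
            \<longleftrightarrow> gcd (fst (walk x i)) (snd (walk x i)) = 1"
        by (rule gcd_shift_nonzero) (use False DM[OF iN0] in \<open>simp_all add: D_def\<close>)
      then show ?thesis by (simp add: Xind_def wQ T_def)
    next
      case True
      define i' where "i' = i - 2*p"
      have i'N0: "i' \<ge> N0" using i by (simp add: i'_def N1_def)
      have ii': "i = i' + 2*p" using i by (simp add: i'_def N1_def)
      have "D i = D i'" using Dper i'N0 ii'
        by (metis (no_types, lifting) add.assoc le_add1 le_trans mult_2)
      then have "D i' = 0" using True by simp
      then have eq: "B * fst (walk x i') = A * snd (walk x i')"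
        unfolding D_def by (simp flip: of_nat_mult)
      have AB: "A + B > 0" using ApB p by simp
      have w1: "walk x i = (fst (walk x i') + 2*A, snd (walk x i') + 2*B)"
        using wk[OF i'N0, of 2] ii' by simp
      have w2: "walk x (i+Q) = (fst (walk x i') + (2+T)*A, snd (walk x i') + (2+T)*B)"
      proof -
        have "i + Q = i' + (2+T)*p" by (simp add: ii' Q_def algebra_simps)
        then show ?thesis using wk[OF i'N0, of "2+T"] by simp
      qed
      have "gcd (fst (walk x i') + 2*A) (snd (walk x i') + 2*B) \<noteq> 1"
        by (rule gcd_shift_zero[OF eq AB]) simp
      moreover have "gcd (fst (walk x i') + (2+T)*A) (snd (walk x i') + (2+T)*B) \<noteq> 1"
        by (rule gcd_shift_zero[OF eq AB]) simp
      ultimately show ?thesis by (simp add: Xind_def w1 w2)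
    qed
  qed
  have per': "\<forall>i\<ge>N1. real (Xind x (i+Q)) = real (Xind x i)" using Xper by simp
  have lim: "(\<lambda>n. (\<Sum>i=1..n. real (Xind x i)) / real n) \<longlonglongrightarrow>
             (\<Sum>j<Q. real (Xind x (N1+1+j))) / real Q"
    by (rule cesaro_periodic[OF Q0 per'])
  have "(\<Sum>j<Q. real (Xind x (N1+1+j))) / real Q \<in> \<rat>"
    by (intro Rats_divide Rats_sum Rats_of_nat)
  moreover have "Sbar x = (\<lambda>n. (\<Sum>i=1..n. real (Xind x i)) / real n)"
    by (rule ext) (simp add: Sbar_def)
  ultimately show ?thesis using lim by auto
qed

end
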